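(* Let $V$ be a finite set, $f:2^V\to\mathbb{R}_+$ nonnegative submodular with $f(\emptyset)=0$, $t_1,\ldots,t_k\in V$ distinct, and $\mathbf{x}=(x_{i,j})_{i\in[k],j\in V}$ with $x_{i,j}\ge0$, $\sum_{i=1}^k x_{i,j}=1$ for all $j\in V$, and $x_{i,t_i}=1$ for all $i$. For $\theta\in[0,1]$ let $A_i(\theta)=\{j: x_{i,j}>\theta\}$ and $B(\theta)=\{j: 1-\max_i x_{i,j}\ge\theta\}$. Then $$\sum_{i=1}^k\int_0^{1/2} f(A_i(\theta))\,d\theta\ \ge\ \sum_{i=1}^k\int_0^{1/2} f(A_i(\theta)\cup B(\theta))\,d\theta-(k-2)\int_0^{1/2} f(B(\theta))\,d\theta.$$ *)

theory Defs
  imports "HOL-Analysis.Analysis"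
begin

definition submodular_on :: "'a set \<Rightarrow> ('a set \<Rightarrow> real) \<Rightarrow> bool" where
  "submodular_on V f \<longleftrightarrow>
     (\<forall>S T. S \<subseteq> V \<longrightarrow> T \<subseteq> V \<longrightarrow> f (S \<union> T) + f (S \<inter> T) \<le> f S + f T)"

end

theory Submission
  imports Defs
begin

lemma setfun_meas:
  fixes P :: "'a \<Rightarrow> real \<Rightarrow> bool"
  assumes V: "finite V" and Pb: "\<And>j. j\<in>V \<Longrightarrow> {\<theta>. P j \<theta>} \<in> sets borel"
  shows "(\<lambda>\<theta>. {j\<in>V. P j \<theta>}) \<in> borel \<rightarrow>\<^sub>M count_space (Pow V)"
proof (subst measurable_count_space_eq_countable)
  show "countable (Pow V)" using V by (simp add: countable_finite)
  have pre: "(\<lambda>\<theta>. {j\<in>V. P j \<theta>}) -` {T} = (\<Inter>j\<in>V. if j \<in> T then {\<theta>. P j \<theta>} else - {\<theta>. P j \<theta>})"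
    if T: "T \<subseteq> V" for T
  proof (rule set_eqI)
    fix \<theta>
    have "\<theta> \<in> (\<lambda>\<theta>. {j\<in>V. P j \<theta>}) -` {T} \<longleftrightarrow> {j\<in>V. P j \<theta>} = T" by simp
    also have "\<dots> \<longleftrightarrow> (\<forall>j\<in>V. (j \<in> T \<longrightarrow> P j \<theta>) \<and> (j \<notin> T \<longrightarrow> \<not> P j \<theta>))"
      using T by blast
    also have "\<dots> \<longleftrightarrow> \<theta> \<in> (\<Inter>j\<in>V. if j \<in> T then {\<theta>. P j \<theta>} else - {\<theta>. P j \<theta>})"
      by (simp only: INT_iff) (simp split: if_split)
    finally show "\<theta> \<in> (\<lambda>\<theta>. {j\<in>V. P j \<theta>}) -` {T} \<longleftrightarrow> \<theta> \<in> (\<Inter>j\<in>V. if j \<in> T then {\<theta>. P j \<theta>} else - {\<theta>. P j \<theta>})" .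
  qed
  have mem: "(\<Inter>j\<in>V. if j \<in> T then {\<theta>. P j \<theta>} else - {\<theta>. P j \<theta>}) \<in> sets borel" for T
  proof (cases "V = {}")
    case True then show ?thesis by simp
  next
    case False
    show ?thesis
    proof (rule sets.finite_INT[OF V False])
    fix j assume "j \<in> V"
    then have "{\<theta>. P j \<theta>} \<in> sets borel" by (rule Pb)
    then show "(if j \<in> T then {\<theta>. P j \<theta>} else - {\<theta>. P j \<theta>}) \<in> sets borel"
      using sets.compl_sets[of "{\<theta>. P j \<theta>}" borel] by simp
  qed
  qed
  show "(\<lambda>\<theta>. {j \<in> V. P j \<theta>}) \<in> space borel \<rightarrow> Pow V \<and>
    (\<forall>a\<in>Pow V. (\<lambda>\<theta>. {j \<in> V. P j \<theta>}) -` {a} \<inter> space borel \<in> sets borel)"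
  proof
    show "(\<lambda>\<theta>. {j \<in> V. P j \<theta>}) \<in> space borel \<rightarrow> Pow V" by auto
    show "\<forall>a\<in>Pow V. (\<lambda>\<theta>. {j \<in> V. P j \<theta>}) -` {a} \<inter> space borel \<in> sets borel"
      using pre mem by simp
  qed
qed

lemma setfun_integrable:
  fixes P :: "'a \<Rightarrow> real \<Rightarrow> bool" and f :: "'a set \<Rightarrow> real"
  assumes "finite V" "\<And>j. j\<in>V \<Longrightarrow> {\<theta>. P j \<theta>} \<in> sets borel"
  shows "(\<lambda>\<theta>. f {j\<in>V. P j \<theta>}) integrable_on {a..b}"
proof -
  have m: "(\<lambda>\<theta>. {j\<in>V. P j \<theta>}) \<in> borel \<rightarrow>\<^sub>M count_space (Pow V)"
    by (rule setfun_meas[OF assms])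
  have fm: "f \<in> count_space (Pow V) \<rightarrow>\<^sub>M borel" by simp
  have g: "(\<lambda>\<theta>. f {j\<in>V. P j \<theta>}) \<in> borel_measurable borel"
    using measurable_compose[OF m fm] by simp
  then have g2: "(\<lambda>\<theta>. f {j\<in>V. P j \<theta>}) \<in> borel_measurable (lebesgue_on {a..b})"
    by (simp add: measurable_completion measurable_restrict_space1)
  define M where "M = (\<Sum>T\<in>Pow V. \<bar>f T\<bar>)"
  have bd: "\<bar>f {j\<in>V. P j \<theta>}\<bar> \<le> M" for \<theta>
    unfolding M_def by (rule member_le_sum) (use assms in auto)
  show ?thesis
    by (rule measurable_bounded_by_integrable_imp_integrable_real[OF g2, of "\<lambda>_. M"])
       (use bd in auto)
qed


lemma borel_lt: "{\<theta>::real. \<theta> < c} \<in> sets borel" by measurable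

definition Lx :: "'a set \<Rightarrow> ('a set \<Rightarrow> real) \<Rightarrow> ('a \<Rightarrow> real) \<Rightarrow> real" where
  "Lx V f c = integral {0..1} (\<lambda>r. f {j\<in>V. r < c j})"

lemma Lx_int: fixes c :: "'a \<Rightarrow> real" and f :: "'a set \<Rightarrow> real" shows "finite V \<Longrightarrow> (\<lambda>r. f {j\<in>V. r < c j}) integrable_on {a..b}"
  by (rule setfun_integrable[where P="\<lambda>j r. r < c j"]) (auto simp: borel_lt)

lemma Lx_cong: "(\<And>j. j \<in> V \<Longrightarrow> a j = b j) \<Longrightarrow> Lx V f a = Lx V f b"
  unfolding Lx_def by (metis (mono_tags, lifting) Collect_cong)

lemma int_zero_on:
  assumes "\<And>r. r \<in> {a..b} \<Longrightarrow> g r = (0::real)"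
  shows "integral {a..b} g = 0"
proof -
  have "integral {a..b} g = integral {a..b} (\<lambda>_. 0::real)"
    by (rule integral_cong) (use assms in auto)
  then show ?thesis by simp
qed

lemma Lx_zero:
  assumes "f {} = 0" "\<And>j. j \<in> V \<Longrightarrow> a j = 0"
  shows "Lx V f a = 0"
  unfolding Lx_def
proof (rule int_zero_on)
  fix r :: real assume "r \<in> {0..1}"
  then have "{j\<in>V. r < a j} = {}" using assms by auto
  then show "f {j\<in>V. r < a j} = 0" by (metis assms(1))
qed

lemma Lx_ind:
  fixes f :: "'a set \<Rightarrow> real"
  assumes V: "finite V" and sub: "submodular_on V f" and f0: "f {} = 0"
    and S: "S \<subseteq> V" and w: "0 \<le> w" "w \<le> 1"
    and c0: "\<And>j. j \<in> V \<Longrightarrow> 0 \<le> c j" and c1: "\<And>j. j \<in> S \<Longrightarrow> c j + w \<le> 1"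
  shows "Lx V f (\<lambda>j. c j + (if j \<in> S then w else 0)) \<le> Lx V f c + w * f S"
proof -
  define D where "D = (\<lambda>r. {j\<in>V. r < c j + (if j \<in> S then w else 0)})"
  define C where "C = (\<lambda>r. {j\<in>V. r < c j})"
  define E where "E = (\<lambda>r. {j\<in>V. j \<in> S \<and> r < c j})"
  have E_borel: "{r. j \<in> S \<and> r < c j} \<in> sets borel" for j
    by (cases "j \<in> S") (auto simp: borel_lt)
  have E_borel': "{r. j \<in> S \<and> r - w < c j} \<in> sets borel" for j
  proof -
    have "{r. j \<in> S \<and> r - w < c j} = (if j \<in> S then {r. r < c j + w} else {})" by auto
    then show ?thesis by (simp add: borel_lt)
  qed
  have intE: "(\<lambda>r. f (E r)) integrable_on {a..b}" for a b
    unfolding E_def by (rule setfun_integrable[OF V, where P="\<lambda>j r. j \<in> S \<and> r < c j"]) (use E_borel in auto)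
  have intE': "(\<lambda>r. f (E (r - w))) integrable_on {a..b}" for a b
    unfolding E_def by (rule setfun_integrable[OF V, where P="\<lambda>j r. j \<in> S \<and> r - w < c j"]) (use E_borel' in auto)
  have intD: "(\<lambda>r. f (D r)) integrable_on {a..b}" for a b
    unfolding D_def by (rule setfun_integrable[OF V, where P="\<lambda>j r. r < c j + (if j \<in> S then w else 0)"]) (auto simp: borel_lt)
  have intC: "(\<lambda>r. f (C r)) integrable_on {a..b}" for a b
    unfolding C_def by (rule Lx_int[OF V])
  have pw: "f (D r) + f (E r) \<le> f (C r) + f (E (r - w))" for r
  proof -
    have "D r = C r \<union> E (r - w)" unfolding D_def C_def E_def using w by auto
    moreover have "E r = C r \<inter> E (r - w)" unfolding C_def E_def using w by auto
    moreover have "C r \<subseteq> V" "E (r - w) \<subseteq> V" unfolding C_def E_def by auto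
    ultimately show ?thesis using sub unfolding submodular_on_def by metis
  qed
  have "integral {0..1} (\<lambda>r. f (D r) + f (E r)) \<le> integral {0..1} (\<lambda>r. f (C r) + f (E (r - w)))"
    by (rule integral_le) (use pw intC intD intE intE' in \<open>auto intro: integrable_add\<close>)
  then have main: "integral {0..1} (\<lambda>r. f (D r)) + integral {0..1} (\<lambda>r. f (E r))
      \<le> integral {0..1} (\<lambda>r. f (C r)) + integral {0..1} (\<lambda>r. f (E (r - w)))"
    using intC intD intE intE' by (simp add: integral_add)
  have sh: "integral {0..1} (\<lambda>r. f (E (r - w))) = integral {-w..1-w} (\<lambda>r. f (E r))"
    using integral_shift_real_ivl[of "-w" "-w" "1-w" "\<lambda>r. f (E r)"] by simp
  have split1: "integral {-w..1-w} (\<lambda>r. f (E r)) = integral {-w..0} (\<lambda>r. f (E r)) + integral {0..1-w} (\<lambda>r. f (E r))"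
    using Henstock_Kurzweil_Integration.integral_combine[of "-w" 0 "1-w" "\<lambda>r. f (E r)"] w intE by simp
  have split2: "integral {0..1} (\<lambda>r. f (E r)) = integral {0..1-w} (\<lambda>r. f (E r)) + integral {1-w..1} (\<lambda>r. f (E r))"
    using Henstock_Kurzweil_Integration.integral_combine[of 0 "1-w" 1 "\<lambda>r. f (E r)"] w intE by simp
  have z: "integral {1-w..1} (\<lambda>r. f (E r)) = 0"
  proof (rule int_zero_on)
    fix r assume "r \<in> {1-w..1}"
    then have "E r = {}" unfolding E_def using c1 by force
    then show "f (E r) = 0" using f0 by simp
  qed
  have neg: "integral {-w..0} (\<lambda>r. f (E r)) = integral {-w..0} (\<lambda>r. f S)"
  proof (rule integral_spike[of "{0}"])
    show "negligible {0::real}" by simp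
    fix r assume "r \<in> {-w..0} - {0}"
    then have "E r = S" unfolding E_def using c0 S by force
    then show "f S = f (E r)" by simp
  qed
  have "integral {-w..0} (\<lambda>r. f S) = w * f S" using w by simp
  have "integral {0..1} (\<lambda>r. f (D r)) \<le> integral {0..1} (\<lambda>r. f (C r)) + w * f S"
    using main sh split1 split2 z neg \<open>integral {-w..0} (\<lambda>r. f S) = w * f S\<close> by linarith
  then show ?thesis unfolding Lx_def D_def C_def by simp
qed

lemma Lx_layer:
  fixes f :: "'a set \<Rightarrow> real"
  assumes V: "finite V" and f0: "f {} = 0"
    and a: "\<And>j. j \<in> V \<Longrightarrow> 0 \<le> a j \<and> a j \<le> 1"
    and w: "0 < w" "w \<le> 1" and S: "S = {j\<in>V. 0 < a j}" and wS: "\<And>j. j \<in> S \<Longrightarrow> w \<le> a j"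
  shows "Lx V f a = w * f S + Lx V f (\<lambda>j. if j \<in> S then a j - w else 0)"
proof -
  define a' where "a' = (\<lambda>j. if j \<in> S then a j - w else 0)"
  have s1: "integral {0..1} (\<lambda>r. f {j\<in>V. r < a j}) =
     integral {0..w} (\<lambda>r. f {j\<in>V. r < a j}) + integral {w..1} (\<lambda>r. f {j\<in>V. r < a j})"
    using Henstock_Kurzweil_Integration.integral_combine[of 0 w 1 "\<lambda>r. f {j\<in>V. r < a j}"] w Lx_int[OF V] by simp
  have p1: "integral {0..w} (\<lambda>r. f {j\<in>V. r < a j}) = integral {0..w} (\<lambda>r. f S)"
  proof (rule integral_spike[of "{w}"])
    show "negligible {w}" by simp
    fix r assume r: "r \<in> {0..w} - {w}"
    have "{j\<in>V. r < a j} = S" using r wS a unfolding S by force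
    then show "f S = f {j\<in>V. r < a j}" by simp
  qed
  have p1': "integral {0..w} (\<lambda>r. f S) = w * f S" using w by simp
  have p2: "integral {w..1} (\<lambda>r. f {j\<in>V. r < a j}) = integral {w..1} (\<lambda>r. f {j\<in>V. r - w < a' j})"
  proof (rule integral_cong)
    fix r assume r: "r \<in> {w..1}"
    have "{j\<in>V. r < a j} = {j\<in>V. r - w < a' j}" using r a w unfolding a'_def S by force
    then show "f {j\<in>V. r < a j} = f {j\<in>V. r - w < a' j}" by simp
  qed
  have p3: "integral {w..1} (\<lambda>r. f {j\<in>V. r - w < a' j}) = integral {0..1-w} (\<lambda>r. f {j\<in>V. r < a' j})"
    using integral_shift_real_ivl[of 0 "-w" "1-w" "\<lambda>r. f {j\<in>V. r < a' j}"] by simp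
  have s2: "integral {0..1} (\<lambda>r. f {j\<in>V. r < a' j}) =
     integral {0..1-w} (\<lambda>r. f {j\<in>V. r < a' j}) + integral {1-w..1} (\<lambda>r. f {j\<in>V. r < a' j})"
    using Henstock_Kurzweil_Integration.integral_combine[of 0 "1-w" 1 "\<lambda>r. f {j\<in>V. r < a' j}"] w Lx_int[OF V] by simp
  have z: "integral {1-w..1} (\<lambda>r. f {j\<in>V. r < a' j}) = 0"
  proof (rule int_zero_on)
    fix r assume r: "r \<in> {1-w..1}"
    have "{j\<in>V. r < a' j} = {}" using r a w unfolding a'_def S by force
    then show "f {j\<in>V. r < a' j} = 0" by (metis f0)
  qed
  show ?thesis unfolding Lx_def a'_def[symmetric]
    using s1 p1 p1' p2 p3 s2 z by linarith
qed

lemma Lx_sub2: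
  fixes f :: "'a set \<Rightarrow> real"
  assumes V: "finite V" and sub: "submodular_on V f" and f0: "f {} = 0"
  shows "(\<And>j. j \<in> V \<Longrightarrow> 0 \<le> a j \<and> 0 \<le> c j \<and> a j + c j \<le> 1) \<Longrightarrow>
     Lx V f (\<lambda>j. a j + c j) \<le> Lx V f a + Lx V f c"
proof (induction "card (a ` {j\<in>V. 0 < a j})" arbitrary: a c rule: less_induct)
  case less
  define S where "S = {j\<in>V. 0 < a j}"
  show ?case
  proof (cases "S = {}")
    case True
    then have a0: "\<And>j. j \<in> V \<Longrightarrow> a j = 0" using less.prems unfolding S_def by force
    have "Lx V f (\<lambda>j. a j + c j) = Lx V f c" by (rule Lx_cong) (simp add: a0)
    moreover have "Lx V f a = 0" using Lx_zero[of f V a] f0 a0 by blast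
    ultimately show ?thesis by simp
  next
    case False
    have finS: "finite (a ` S)" using V unfolding S_def by simp
    define w where "w = Min (a ` S)"
    have wmem: "w \<in> a ` S" unfolding w_def using finS False by simp
    have wS: "\<And>j. j \<in> S \<Longrightarrow> w \<le> a j" unfolding w_def using finS by simp
    have w0: "0 < w" using wmem unfolding S_def by auto
    have w1: "w \<le> 1" using wmem less.prems unfolding S_def by force
    define a' where "a' = (\<lambda>j. if j \<in> S then a j - w else 0)"
    have lay: "Lx V f a = w * f S + Lx V f a'"
      unfolding a'_def by (rule Lx_layer[of V f a w S]) (use V f0 w0 w1 wS less.prems in \<open>force simp: S_def\<close>)+
    have "Lx V f (\<lambda>j. a j + c j) = Lx V f (\<lambda>j. (c j + a' j) + (if j \<in> S then w else 0))"
    proof (rule Lx_cong)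
      fix j assume j: "j \<in> V"
      have "j \<notin> S \<Longrightarrow> a j = 0" using less.prems[OF j] j unfolding S_def by force
      then show "a j + c j = c j + a' j + (if j \<in> S then w else 0)" by (auto simp: a'_def)
    qed
    also have "\<dots> \<le> Lx V f (\<lambda>j. c j + a' j) + w * f S"
      by (rule Lx_ind[OF V sub f0 _ _ w1]) (use less.prems w0 wS in \<open>force simp: a'_def S_def\<close>)+
    also have "Lx V f (\<lambda>j. c j + a' j) = Lx V f (\<lambda>j. a' j + c j)" by (simp add: add.commute)
    also have "\<dots> \<le> Lx V f a' + Lx V f c"
    proof (rule less.hyps)
      have sub1: "a' ` {j\<in>V. 0 < a' j} \<subseteq> (\<lambda>v. v - w) ` (a ` {j\<in>V. w < a j})"
        unfolding a'_def S_def by (auto split: if_splits)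
      have sub2: "a ` {j\<in>V. w < a j} \<subset> a ` {j\<in>V. 0 < a j}"
      proof -
        have "a ` {j\<in>V. w < a j} \<subseteq> a ` {j\<in>V. 0 < a j}" using w0 by auto
        moreover have "w \<notin> a ` {j\<in>V. w < a j}" by auto
        ultimately show ?thesis using wmem unfolding S_def by blast
      qed
      have "card (a' ` {j\<in>V. 0 < a' j}) \<le> card ((\<lambda>v. v - w) ` (a ` {j\<in>V. w < a j}))"
        by (rule card_mono) (use V sub1 in auto)
      also have "\<dots> \<le> card (a ` {j\<in>V. w < a j})" by (rule card_image_le) (use V in auto)
      also have "\<dots> < card (a ` {j\<in>V. 0 < a j})" by (rule psubset_card_mono) (use V sub2 in auto)
      finally show "card (a' ` {j\<in>V. 0 < a' j}) < card (a ` {j\<in>V. 0 < a j})" .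
      show "\<And>j. j \<in> V \<Longrightarrow> 0 \<le> a' j \<and> 0 \<le> c j \<and> a' j + c j \<le> 1"
        using less.prems wS w0 unfolding a'_def S_def by force
    qed
    finally show ?thesis using lay by linarith
  qed
qed

lemma Lx_sum:
  fixes f :: "'a set \<Rightarrow> real"
  assumes V: "finite V" and sub: "submodular_on V f" and f0: "f {} = 0"
  shows "finite I \<Longrightarrow> (\<And>i j. i \<in> I \<Longrightarrow> j \<in> V \<Longrightarrow> 0 \<le> c i j) \<Longrightarrow> (\<And>j. j \<in> V \<Longrightarrow> (\<Sum>i\<in>I. c i j) \<le> 1) \<Longrightarrow>
     Lx V f (\<lambda>j. \<Sum>i\<in>I. c i j) \<le> (\<Sum>i\<in>I. Lx V f (c i))"
proof (induction I rule: finite_induct)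
  case empty
  then show ?case using Lx_zero[of f V "\<lambda>_. 0"] f0 by simp
next
  case (insert i F)
  have nn: "0 \<le> (\<Sum>i\<in>F. c i j)" if "j \<in> V" for j
    using insert.prems that by (auto intro: sum_nonneg)
  have "Lx V f (\<lambda>j. \<Sum>i\<in>insert i F. c i j) = Lx V f (\<lambda>j. c i j + (\<Sum>i\<in>F. c i j))"
    using insert.hyps by simp
  also have "\<dots> \<le> Lx V f (c i) + Lx V f (\<lambda>j. \<Sum>i\<in>F. c i j)"
    by (rule Lx_sub2[OF V sub f0]) (use insert nn in auto)
  also have "\<dots> \<le> Lx V f (c i) + (\<Sum>i\<in>F. Lx V f (c i))"
  proof -
    have "Lx V f (\<lambda>j. \<Sum>i\<in>F. c i j) \<le> (\<Sum>i\<in>F. Lx V f (c i))"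
    proof (rule insert.IH)
      show "\<And>i j. i \<in> F \<Longrightarrow> j \<in> V \<Longrightarrow> 0 \<le> c i j" using insert.prems by auto
      show "(\<Sum>i\<in>F. c i j) \<le> 1" if "j \<in> V" for j
        using insert.prems(1)[of i j] insert.prems(2)[of j] insert.hyps that by auto
    qed
    then show ?thesis by simp
  qed
  also have "\<dots> = (\<Sum>i\<in>insert i F. Lx V f (c i))" using insert.hyps by simp
  finally show ?case .
qed

lemma Lx_double:
  fixes f :: "'a set \<Rightarrow> real"
  assumes V: "finite V"
  shows "Lx V f (\<lambda>j. 2 * b j) = 2 * integral {0..1/2} (\<lambda>r. f {j\<in>V. r < b j})"
proof -
  let ?g = "\<lambda>r. f {j\<in>V. r < 2 * b j}"
  have "(?g has_integral Lx V f (\<lambda>j. 2 * b j)) {0..1}"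
    unfolding Lx_def using Lx_int[OF V, where c="\<lambda>j. 2 * b j" and f=f and a=0 and b=1] by (simp add: has_integral_integral)
  from has_integral_stretch_real[OF this, of 2]
  have "((\<lambda>x. ?g (2 * x)) has_integral (1/2) * Lx V f (\<lambda>j. 2 * b j)) {0..1/2}" by simp
  moreover have "(\<lambda>x. ?g (2 * x)) = (\<lambda>r. f {j\<in>V. r < b j})" by auto
  ultimately have "integral {0..1/2} (\<lambda>r. f {j\<in>V. r < b j}) = (1/2) * Lx V f (\<lambda>j. 2 * b j)"
    by (simp add: integral_unique)
  then show ?thesis by simp
qed

theorem lemma6:
  fixes V :: "'a set" and f :: "'a set \<Rightarrow> real" and k :: nat
    and t :: "nat \<Rightarrow> 'a" and x :: "nat \<Rightarrow> 'a \<Rightarrow> real"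
  assumes "finite V"
    and "\<And>S. S \<subseteq> V \<Longrightarrow> f S \<ge> 0"
    and "submodular_on V f"
    and "f {} = 0"
    and "\<And>i. i \<in> {1..k} \<Longrightarrow> t i \<in> V"
    and "inj_on t {1..k}"
    and "\<And>i j. i \<in> {1..k} \<Longrightarrow> j \<in> V \<Longrightarrow> x i j \<ge> 0"
    and "\<And>j. j \<in> V \<Longrightarrow> (\<Sum>i\<in>{1..k}. x i j) = 1"
    and "\<And>i. i \<in> {1..k} \<Longrightarrow> x i (t i) = 1"
  defines "A \<equiv> (\<lambda>i (\<theta>::real). {j\<in>V. x i j > \<theta>})"
    and "B \<equiv> (\<lambda>\<theta>::real. {j\<in>V. 1 - (MAX i\<in>{1..k}. x i j) \<ge> \<theta>})"
  shows "(\<Sum>i\<in>{1..k}. integral {0..1/2} (\<lambda>\<theta>. f (A i \<theta>)))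
         \<ge> (\<Sum>i\<in>{1..k}. integral {0..1/2} (\<lambda>\<theta>. f (A i \<theta> \<union> B \<theta>)))
           - (real k - 2) * integral {0..1/2} (\<lambda>\<theta>. f (B \<theta>))"
proof -
  note V = assms(1) and sub = assms(3) and f0 = assms(4) and xnn = assms(7) and xsum = assms(8)
  define m where "m = (\<lambda>j. MAX i\<in>{1..k}. x i j)"
  have B': "B = (\<lambda>\<theta>. {j\<in>V. \<theta> \<le> 1 - m j})" unfolding B_def m_def by simp
  define c where "c = (\<lambda>i j. min (x i j) (1 - m j))"
  define b where "b = (\<lambda>j. min (1 - m j) (1/2))"
  have kpos: "{1..k} \<noteq> {}" if "j \<in> V" for j using xsum[OF that] by (cases "k = 0") auto
  have xle: "x i j \<le> m j" if "j \<in> V" "i \<in> {1..k}" for i j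
    unfolding m_def using that by (auto intro: Max_ge)
  have xmax: "\<exists>i0\<in>{1..k}. x i0 j = m j" if "j \<in> V" for j
  proof -
    have "m j \<in> (\<lambda>i. x i j) ` {1..k}" unfolding m_def by (rule Max_in) (use kpos[OF that] in auto)
    then show ?thesis by auto
  qed
  have x1: "x i j \<le> 1" if "j \<in> V" "i \<in> {1..k}" for i j
    using member_le_sum[of i "{1..k}" "\<lambda>i. x i j"] xnn xsum that by auto
  have m01: "0 \<le> m j \<and> m j \<le> 1" if "j \<in> V" for j
    using xmax[OF that] x1 xnn that by fastforce
  have csum: "(\<Sum>i\<in>{1..k}. c i j) = 2 * b j" if j: "j \<in> V" for j
  proof (cases "m j \<ge> 1/2")
    case True
    obtain i0 where i0: "i0 \<in> {1..k}" "x i0 j = m j" using xmax[OF j] by blast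
    have rest: "(\<Sum>i\<in>{1..k} - {i0}. x i j) = 1 - m j"
      using sum.remove[of "{1..k}" i0 "\<lambda>i. x i j"] i0 xsum[OF j] by simp
    have "x i j \<le> 1 - m j" if "i \<in> {1..k} - {i0}" for i
      using member_le_sum[of i "{1..k} - {i0}" "\<lambda>i. x i j"] rest xnn j that by auto
    then have "(\<Sum>i\<in>{1..k} - {i0}. c i j) = (\<Sum>i\<in>{1..k} - {i0}. x i j)"
      unfolding c_def by (intro sum.cong) auto
    moreover have "c i0 j = 1 - m j" unfolding c_def using i0 True by simp
    ultimately show ?thesis
      using sum.remove[of "{1..k}" i0 "\<lambda>i. c i j"] i0 rest True unfolding b_def by simp
  next
    case False
    have "(\<Sum>i\<in>{1..k}. c i j) = (\<Sum>i\<in>{1..k}. x i j)"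
      unfolding c_def using xle[OF j] False by (intro sum.cong) force+
    then show ?thesis using xsum[OF j] False unfolding b_def by simp
  qed
  have chalf: "c i j \<le> 1/2" if "j \<in> V" "i \<in> {1..k}" for i j
    using xle[OF that] unfolding c_def by linarith
  have cnn: "0 \<le> c i j" if "i \<in> {1..k}" "j \<in> V" for i j
    using xnn[OF that] m01[OF that(2)] unfolding c_def by simp
  have intA: "(\<lambda>\<theta>. f (A i \<theta>)) integrable_on {0..1/2}" for i
    unfolding A_def by (rule setfun_integrable[OF V, where P="\<lambda>j r. r < x i j"]) (auto simp: borel_lt)
  have intB: "(\<lambda>\<theta>. f (B \<theta>)) integrable_on {0..1/2}"
    unfolding B' by (rule setfun_integrable[OF V, where P="\<lambda>j r. r \<le> 1 - m j"]) measurable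
  have intU: "(\<lambda>\<theta>. f (A i \<theta> \<union> B \<theta>)) integrable_on {0..1/2}" for i
  proof -
    have "A i \<theta> \<union> B \<theta> = {j\<in>V. \<theta> < x i j \<or> \<theta> \<le> 1 - m j}" for \<theta>
      unfolding A_def B' by auto
    then show ?thesis
      by (simp only:) (rule setfun_integrable[OF V, where P="\<lambda>j r. r < x i j \<or> r \<le> 1 - m j"], measurable)
  qed
  have intI: "(\<lambda>\<theta>. f (A i \<theta> \<inter> B \<theta>)) integrable_on {0..1/2}" for i
  proof -
    have "A i \<theta> \<inter> B \<theta> = {j\<in>V. \<theta> < x i j \<and> \<theta> \<le> 1 - m j}" for \<theta>
      unfolding A_def B' by auto
    then show ?thesis
      by (simp only:) (rule setfun_integrable[OF V, where P="\<lambda>j r. r < x i j \<and> r \<le> 1 - m j"], measurable)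
  qed
  have smod: "integral {0..1/2} (\<lambda>\<theta>. f (A i \<theta> \<union> B \<theta>)) + integral {0..1/2} (\<lambda>\<theta>. f (A i \<theta> \<inter> B \<theta>))
      \<le> integral {0..1/2} (\<lambda>\<theta>. f (A i \<theta>)) + integral {0..1/2} (\<lambda>\<theta>. f (B \<theta>))" for i
  proof -
    have "integral {0..1/2} (\<lambda>\<theta>. f (A i \<theta> \<union> B \<theta>) + f (A i \<theta> \<inter> B \<theta>))
       \<le> integral {0..1/2} (\<lambda>\<theta>. f (A i \<theta>) + f (B \<theta>))"
    proof (rule integral_le)
      show "f (A i \<theta> \<union> B \<theta>) + f (A i \<theta> \<inter> B \<theta>) \<le> f (A i \<theta>) + f (B \<theta>)" for \<theta>
      proof -
        have "A i \<theta> \<subseteq> V" "B \<theta> \<subseteq> V" unfolding A_def B_def by auto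
        then show ?thesis using sub unfolding submodular_on_def by simp
      qed
    qed (use intA intB intU intI in \<open>auto intro: integrable_add\<close>)
    then show ?thesis using intA intB intU intI by (simp add: integral_add)
  qed
  have negN: "negligible (insert (1/2) ((\<lambda>j. 1 - m j) ` V))"
    using V by (intro negligible_finite) auto
  have eqI: "integral {0..1/2} (\<lambda>\<theta>. f (A i \<theta> \<inter> B \<theta>)) = Lx V f (c i)" if i: "i \<in> {1..k}" for i
  proof -
    have "integral {0..1/2} (\<lambda>\<theta>. f (A i \<theta> \<inter> B \<theta>)) = integral {0..1/2} (\<lambda>\<theta>. f {j\<in>V. \<theta> < c i j})"
    proof (rule integral_spike[OF negN])
      fix \<theta> assume th: "\<theta> \<in> {0..1/2} - insert (1/2) ((\<lambda>j. 1 - m j) ` V)"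
      have "A i \<theta> \<inter> B \<theta> = {j\<in>V. \<theta> < c i j}"
        unfolding A_def B' c_def using th by force
      then show "f {j\<in>V. \<theta> < c i j} = f (A i \<theta> \<inter> B \<theta>)" by simp
    qed
    also have "\<dots> = Lx V f (c i)"
    proof -
      have "Lx V f (c i) = integral {0..1/2} (\<lambda>\<theta>. f {j\<in>V. \<theta> < c i j}) + integral {1/2..1} (\<lambda>\<theta>. f {j\<in>V. \<theta> < c i j})"
        unfolding Lx_def
        using Henstock_Kurzweil_Integration.integral_combine[of 0 "1/2" 1 "\<lambda>\<theta>. f {j\<in>V. \<theta> < c i j}"] Lx_int[OF V] by simp
      moreover have "integral {1/2..1} (\<lambda>\<theta>. f {j\<in>V. \<theta> < c i j}) = 0"
      proof (rule int_zero_on)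
        fix \<theta> assume "\<theta> \<in> {1/2..1::real}"
        then have "{j\<in>V. \<theta> < c i j} = {}" using chalf i by force
        then show "f {j\<in>V. \<theta> < c i j} = 0" by (metis f0)
      qed
      ultimately show ?thesis by simp
    qed
    finally show ?thesis .
  qed
  have eqB: "integral {0..1/2} (\<lambda>\<theta>. f (B \<theta>)) = integral {0..1/2} (\<lambda>\<theta>. f {j\<in>V. \<theta> < b j})"
  proof (rule integral_spike[OF negN])
    fix \<theta> assume th: "\<theta> \<in> {0..1/2} - insert (1/2) ((\<lambda>j. 1 - m j) ` V)"
    have "B \<theta> = {j\<in>V. \<theta> < b j}"
      unfolding B' b_def using th by force
    then show "f {j\<in>V. \<theta> < b j} = f (B \<theta>)" by simp
  qed
  have "2 * integral {0..1/2} (\<lambda>\<theta>. f (B \<theta>)) = Lx V f (\<lambda>j. 2 * b j)"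
    using eqB Lx_double[OF V, of f b] by simp
  also have "\<dots> = Lx V f (\<lambda>j. \<Sum>i\<in>{1..k}. c i j)"
    by (rule Lx_cong) (use csum in simp)
  also have "\<dots> \<le> (\<Sum>i\<in>{1..k}. Lx V f (c i))"
    by (rule Lx_sum[OF V sub f0]) (use cnn csum in \<open>auto simp: b_def min_def\<close>)
  also have "\<dots> = (\<Sum>i\<in>{1..k}. integral {0..1/2} (\<lambda>\<theta>. f (A i \<theta> \<inter> B \<theta>)))"
    using eqI by simp
  finally have two: "2 * integral {0..1/2} (\<lambda>\<theta>. f (B \<theta>)) \<le> (\<Sum>i\<in>{1..k}. integral {0..1/2} (\<lambda>\<theta>. f (A i \<theta> \<inter> B \<theta>)))" .
  have "(\<Sum>i\<in>{1..k}. integral {0..1/2} (\<lambda>\<theta>. f (A i \<theta> \<union> B \<theta>)) + integral {0..1/2} (\<lambda>\<theta>. f (A i \<theta> \<inter> B \<theta>)))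
      \<le> (\<Sum>i\<in>{1..k}. integral {0..1/2} (\<lambda>\<theta>. f (A i \<theta>)) + integral {0..1/2} (\<lambda>\<theta>. f (B \<theta>)))"
    by (rule sum_mono) (rule smod)
  then have "(\<Sum>i\<in>{1..k}. integral {0..1/2} (\<lambda>\<theta>. f (A i \<theta> \<union> B \<theta>))) + (\<Sum>i\<in>{1..k}. integral {0..1/2} (\<lambda>\<theta>. f (A i \<theta> \<inter> B \<theta>)))
      \<le> (\<Sum>i\<in>{1..k}. integral {0..1/2} (\<lambda>\<theta>. f (A i \<theta>))) + real k * integral {0..1/2} (\<lambda>\<theta>. f (B \<theta>))"
    by (simp add: sum.distrib)
  then show ?thesis using two by (simp add: algebra_simps)
qed
end
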